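(* In the mirror triangle method with inexact directional derivatives (see context), let $\mathbb{E}_{k+1}$ denote conditional expectation over the randomness of iteration $k+1$ given iterations $1,\dots,k$. For every $u\in\mathbb{R}^n$ and $k\ge0$, with $R_k=\|u_k-u\|_L$ and $M_k=\|\nabla f(y_{k+1})\|_2$, $$\alpha_{k+1}\langle\nabla f(y_{k+1}),u_k-u\rangle\le A_{k+1}\big(f(y_{k+1})-\mathbb{E}_{k+1}f(x_{k+1})\big)+V(u,u_k)-\mathbb{E}_{k+1}V(u,u_{k+1})+\frac{A_{k+1}}L\delta^2+A_{k+1}\delta\frac{M_k}{L\sqrt n}+\alpha_{k+1}\delta\frac{\sqrt n}{\sqrt L}R_k.$$
   Context: $f:\mathbb{R}^n\to\mathbb{R}$ is convex, differentiable, with $\|\nabla f(x)-\nabla f(y)\|_2\le L\|x-y\|_2$. $\|x\|_L^2=L\sum_ix_i^2$ and $V(x,y)=\frac12\|x-y\|_L^2$. For each $k\ge0$, $e_{k+1}$ is a random vector on the Euclidean unit sphere such that, conditionally on the previous iterations, $\mathbb{E}[e_{k+1}^ie_{k+1}^j]=0$ for $i\ne j$ and $\mathbb{E}[(e_{k+1}^i)^2]=\frac1n$; $\tilde\delta_{k+1}$ is a random real with $|\tilde\delta_{k+1}|\le\delta$; $\tilde\nabla f(y)=n(\langle\nabla f(y),e_{k+1}\rangle+\tilde\delta_{k+1})e_{k+1}$. Method: $x_0=u_0=y_0$, $\alpha_0=1-\frac1n$, $A_0=\alpha_0$; for $k\ge0$: $\alpha_{k+1}=\frac{k+2n}{2n^2}$,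 $A_{k+1}=A_k+\alpha_{k+1}$, $y_{k+1}=\frac{\alpha_{k+1}u_k+A_kx_k}{A_{k+1}}$, $u_{k+1}=\arg\min_{x\in\mathbb{R}^n}\{V(x,u_k)+\alpha_{k+1}\langle\tilde\nabla f(y_{k+1}),x\rangle\}$, $x_{k+1}=y_{k+1}+n\frac{\alpha_{k+1}}{A_{k+1}}(u_{k+1}-u_k)$. *)

theory Defs
  imports "HOL-Analysis.Analysis" "HOL-Probability.Probability"
begin

definition alpha :: "nat \<Rightarrow> nat \<Rightarrow> real" where
  "alpha n m = (if m = 0 then 1 - 1 / real n else (real (m - 1) + 2 * real n) / (2 * (real n)^2))"

definition Aseq :: "nat \<Rightarrow> nat \<Rightarrow> real" where
  "Aseq n k = (\<Sum>j\<le>k. alpha n j)"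

definition normL :: "real \<Rightarrow> real^'n \<Rightarrow> real" where
  "normL L x = sqrt (L * (\<Sum>i\<in>UNIV. (x $ i)^2))"

definition Vdiv :: "real \<Rightarrow> real^'n \<Rightarrow> real^'n \<Rightarrow> real" where
  "Vdiv L x y = (1/2) * (normL L (x - y))^2"

definition tgrad :: "(real^'n \<Rightarrow> real^'n) \<Rightarrow> real^'n \<Rightarrow> real^'n \<Rightarrow> real \<Rightarrow> real^'n" where
  "tgrad df y e d = (real CARD('n) * (df y \<bullet> e + d)) *\<^sub>R e"

definition ynext :: "real \<Rightarrow> (real^'n \<Rightarrow> real^'n) \<Rightarrow> nat \<Rightarrow> real^'n \<Rightarrow> real^'n \<Rightarrow> real^'n" where
  "ynext L df k x u = (1 / Aseq CARD('n) (Suc k)) *\<^sub>R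
      (alpha CARD('n) (Suc k) *\<^sub>R u + Aseq CARD('n) k *\<^sub>R x)"

definition unext :: "real \<Rightarrow> (real^'n \<Rightarrow> real^'n) \<Rightarrow> nat \<Rightarrow> real^'n \<Rightarrow> real^'n \<Rightarrow> real^'n \<Rightarrow> real \<Rightarrow> real^'n" where
  "unext L df k x u e d =
     arg_min (\<lambda>z. Vdiv L z u + alpha CARD('n) (Suc k) * (tgrad df (ynext L df k x u) e d \<bullet> z)) (\<lambda>_. True)"

definition xnext :: "real \<Rightarrow> (real^'n \<Rightarrow> real^'n) \<Rightarrow> nat \<Rightarrow> real^'n \<Rightarrow> real^'n \<Rightarrow> real^'n \<Rightarrow> real \<Rightarrow> real^'n" where
  "xnext L df k x u e d = ynext L df k x u +
     (real CARD('n) * alpha CARD('n) (Suc k) / Aseq CARD('n) (Suc k)) *\<^sub>R (unext L df k x u e d - u)"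

text \<open>Trajectory (x_k, u_k) driven by realisations es (Suc k) = e_{k+1}, ds (Suc k) = tilde delta_{k+1}.\<close>
fun traj :: "real \<Rightarrow> (real^'n \<Rightarrow> real^'n) \<Rightarrow> real^'n \<Rightarrow> (nat \<Rightarrow> real^'n) \<Rightarrow> (nat \<Rightarrow> real)
              \<Rightarrow> nat \<Rightarrow> (real^'n) \<times> (real^'n)" where
  "traj L df x0 es ds 0 = (x0, x0)"
| "traj L df x0 es ds (Suc k) =
     (let (x, u) = traj L df x0 es ds k in
       (xnext L df k x u (es (Suc k)) (ds (Suc k)), unext L df k x u (es (Suc k)) (ds (Suc k))))"

end

theory Submission
  imports Defs
begin


lemma descent:
  fixes f :: "'a::real_inner \<Rightarrow> real"
  assumes grad: "\<And>x. (f has_derivative (\<lambda>h. df x \<bullet> h)) (at x)"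
    and lip: "\<And>x y. norm (df x - df y) \<le> L * norm (x - y)"
  shows "f (y + h) \<le> f y + df y \<bullet> h + L/2 * (norm h)^2"
proof -
  define \<psi> where "\<psi> t = f (y + t *\<^sub>R h) - t * (df y \<bullet> h) - L/2 * t^2 * (norm h)^2" for t
  have D: "DERIV \<psi> t :> (df (y + t *\<^sub>R h) \<bullet> h - df y \<bullet> h - L * t * (norm h)^2)" for t
  proof -
    have 1: "((\<lambda>t. y + t *\<^sub>R h) has_derivative (\<lambda>s. s *\<^sub>R h)) (at t)"
      by (auto intro!: derivative_eq_intros)
    have 2: "((\<lambda>t. f (y + t *\<^sub>R h)) has_derivative (\<lambda>s. df (y + t *\<^sub>R h) \<bullet> (s *\<^sub>R h))) (at t)"
      using has_derivative_compose[OF 1 grad] by simp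
    have 3: "((\<lambda>t. f (y + t *\<^sub>R h)) has_real_derivative (df (y + t *\<^sub>R h) \<bullet> h)) (at t)"
      using 2 unfolding has_field_derivative_def by (simp add: mult.commute[of _ "df (y + t *\<^sub>R h) \<bullet> h"])
    show ?thesis unfolding \<psi>_def
      by (rule derivative_eq_intros 3 | simp)+
  qed
  have "\<psi> 1 \<le> \<psi> 0"
  proof (rule DERIV_nonpos_imp_nonincreasing[of 0 1])
    fix t :: real assume t: "0 \<le> t" "t \<le> 1"
    have "(df (y + t *\<^sub>R h) - df y) \<bullet> h \<le> norm (df (y + t *\<^sub>R h) - df y) * norm h"
      by (rule norm_cauchy_schwarz)
    also have "\<dots> \<le> L * norm (t *\<^sub>R h) * norm h"
      using lip[of "y + t *\<^sub>R h" y] by (intro mult_right_mono) auto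
    also have "\<dots> = L * t * (norm h)^2" using t by (simp add: power2_eq_square)
    finally show "\<exists>y'. DERIV \<psi> t :> y' \<and> y' \<le> 0"
      using D[of t] by (intro exI[of _ "df (y + t *\<^sub>R h) \<bullet> h - df y \<bullet> h - L * t * (norm h)^2"])
        (auto simp: inner_diff_left)
  qed simp
  thus ?thesis unfolding \<psi>_def by simp
qed



lemma sum_sq_norm: "(\<Sum>i\<in>UNIV. ((x::real^'n) $ i)^2) = (norm x)^2"
  by (simp only: power2_norm_eq_inner) (simp add: inner_vec_def power2_eq_square)

lemma norm_sq_diff_scale: "(norm (v - c *\<^sub>R t))^2 = (norm v)^2 - 2*c*(t \<bullet> v) + c^2 * (norm (t::'a::real_inner))^2"
  by (simp only: power2_norm_eq_inner) (simp add: inner_diff_left inner_diff_right inner_commute power2_eq_square algebra_simps)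

lemma normL_eq: "L \<ge> 0 \<Longrightarrow> normL L (x::real^'n) = sqrt L * norm x"
  unfolding normL_def sum_sq_norm by (simp add: real_sqrt_mult)

lemma normL_sq: "L \<ge> 0 \<Longrightarrow> (normL L (x::real^'n))^2 = L * (norm x)^2"
  by (simp add: normL_eq power_mult_distrib)

lemma Vdiv_eq: "L \<ge> 0 \<Longrightarrow> Vdiv L x y = L / 2 * (norm (x - y))^2"
  unfolding Vdiv_def using normL_sq by simp

lemma unext_eq:
  fixes x u e :: "real^'n"
  assumes L: "L > 0"
  shows "unext L df k x u e d = u - (alpha CARD('n) (Suc k) / L) *\<^sub>R tgrad df (ynext L df k x u) e d"
proof -
  define a where "a = alpha CARD('n) (Suc k)"
  define t :: "real^'n" where "t = tgrad df (ynext L df k x u) e d"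
  define z0 where "z0 = u - (a / L) *\<^sub>R t"
  define \<Phi> where "\<Phi> z = Vdiv L z u + a * (t \<bullet> z)" for z
  have key: "\<Phi> z = \<Phi> z0 + L/2 * (norm (z - z0))^2" for z
  proof -
    have e1: "z - u = (z - z0) - (a/L) *\<^sub>R t" unfolding z0_def by simp
    have F1: "(norm (z - u))^2 = (norm (z - z0))^2 - 2*(a/L)*(t \<bullet> (z - z0)) + (a/L)^2 * (norm t)^2"
      unfolding e1 by (rule norm_sq_diff_scale)
    have A1: "L/2 * (norm (z - u))^2 = L/2 * (norm (z - z0))^2 - a*(t \<bullet> (z - z0)) + a^2/(2*L) * (norm t)^2"
      unfolding F1 using L by (simp add: field_simps power2_eq_square)
    have "z0 - u = - (a/L) *\<^sub>R t" unfolding z0_def by simp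
    hence "(norm (z0 - u))^2 = (a/L)^2 * (norm t)^2" by (simp add: power_mult_distrib power_divide)
    hence A2: "L/2 * (norm (z0 - u))^2 = a^2/(2*L) * (norm t)^2" using L by (simp add: field_simps power2_eq_square)
    have A3: "a * (t \<bullet> (z - z0)) = a * (t \<bullet> z) - a * (t \<bullet> z0)" by (simp add: inner_diff_right right_diff_distrib)
    show ?thesis unfolding \<Phi>_def Vdiv_eq[OF less_imp_le[OF L]] using A1 A2 A3
      by linarith
  qed
  have le: "\<Phi> z0 \<le> \<Phi> z" for z
  proof -
    have "0 \<le> L/2 * (norm (z - z0))^2" using L by simp
    thus ?thesis using key[of z] by linarith
  qed
  have min0: "is_arg_min \<Phi> (\<lambda>_. True) z0"
    unfolding is_arg_min_linorder using le by auto
  have "is_arg_min \<Phi> (\<lambda>_. True) (arg_min \<Phi> (\<lambda>_. True))"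
    unfolding arg_min_def using min0 by (rule someI)
  hence "\<Phi> (arg_min \<Phi> (\<lambda>_. True)) \<le> \<Phi> z0" unfolding is_arg_min_linorder by auto
  hence "L/2 * (norm (arg_min \<Phi> (\<lambda>_. True) - z0))^2 \<le> 0" using key[of "arg_min \<Phi> (\<lambda>_. True)"] by simp
  hence "(norm (arg_min \<Phi> (\<lambda>_. True) - z0))^2 \<le> 0" using L by (simp add: mult_le_0_iff)
  hence "arg_min \<Phi> (\<lambda>_. True) = z0" by simp
  thus ?thesis unfolding unext_def \<Phi>_def z0_def a_def t_def by simp
qed

lemma Aseq_closed: "n \<ge> 1 \<Longrightarrow> 4 * (real n)^2 * Aseq n m = 4*(real n)^2 - 4 * real n + real m * (real m - 1) + 4 * real n * real m"
proof (induction m)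
  case 0 thus ?case by (simp add: Aseq_def alpha_def field_simps power2_eq_square)
next
  case (Suc m)
  have "Aseq n (Suc m) = Aseq n m + alpha n (Suc m)" unfolding Aseq_def by simp
  thus ?case using Suc by (simp add: alpha_def field_simps power2_eq_square)
qed



lemma integrable_cont:
  fixes M :: "((real^'n) \<times> real) measure" and h :: "(real^'n) \<times> real \<Rightarrow> real"
  assumes prob: "prob_space M" and sets_M: "sets M = sets borel"
   and sphere: "AE p in M. norm (fst p) = 1" and dbound: "AE p in M. \<bar>snd p\<bar> \<le> \<delta>"
   and cont: "continuous_on UNIV h"
  shows "integrable M h"
proof -
  interpret prob_space M by (rule prob)
  define S where "S = sphere (0::real^'n) 1 \<times> cball (0::real) \<delta>"
  have "compact S" unfolding S_def by (intro compact_Times compact_sphere compact_cball)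
  hence "compact (h ` S)" using cont by (intro compact_continuous_image) (auto intro: continuous_on_subset)
  then obtain B where B: "\<And>x. x \<in> h ` S \<Longrightarrow> norm x \<le> B"
    using compact_imp_bounded bounded_iff by metis
  have "AE p in M. p \<in> S" using sphere dbound
    by eventually_elim (auto simp: S_def mem_Times_iff dist_norm)
  hence ae: "AE p in M. norm (h p) \<le> B" by eventually_elim (intro B imageI)
  have "h \<in> borel_measurable borel" using cont by (rule borel_measurable_continuous_onI)
  hence "h \<in> borel_measurable M" by (simp add: measurable_cong_sets[OF sets_M refl])
  thus ?thesis using ae by (intro integrable_const_bound)
qed

lemma quad_exp:
  fixes M :: "((real^'n) \<times> real) measure" and v w :: "real^'n"
  assumes prob: "prob_space M" and sets_M: "sets M = sets borel"
    and sphere: "AE p in M. norm (fst p) = 1"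
    and dbound: "AE p in M. \<bar>snd p\<bar> \<le> \<delta>"
    and orth: "\<And>i j. i \<noteq> j \<Longrightarrow> (\<integral>p. fst p $ i * fst p $ j \<partial>M) = 0"
    and var: "\<And>i. (\<integral>p. (fst p $ i)^2 \<partial>M) = 1 / real CARD('n)"
  shows "(\<integral>p. (v \<bullet> fst p) * (w \<bullet> fst p) \<partial>M) = (v \<bullet> w) / real CARD('n)"
proof -
  note I = integrable_cont[OF prob sets_M sphere dbound]
  have E: "(\<integral>p. fst p $ i * fst p $ j \<partial>M) = (if i = j then 1 / real CARD('n) else 0)" for i j
    using orth[of i j] var[of i] by (auto simp: power2_eq_square)
  have eq: "(v \<bullet> fst p) * (w \<bullet> fst p) = (\<Sum>i\<in>UNIV. \<Sum>j\<in>UNIV. (v $ i * w $ j) * (fst p $ i * fst p $ j))" for p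
    unfolding inner_vec_def by (simp add: sum_product algebra_simps)
  have "(\<integral>p. (v \<bullet> fst p) * (w \<bullet> fst p) \<partial>M) = (\<Sum>i\<in>UNIV. \<Sum>j\<in>UNIV. (v $ i * w $ j) * (\<integral>p. fst p $ i * fst p $ j \<partial>M))"
  proof -
    have "(\<integral>p. (\<Sum>i\<in>UNIV. \<Sum>j\<in>UNIV. (v $ i * w $ j) * (fst p $ i * fst p $ j)) \<partial>M)
       = (\<Sum>i\<in>UNIV. (\<integral>p. (\<Sum>j\<in>UNIV. (v $ i * w $ j) * (fst p $ i * fst p $ j)) \<partial>M))"
      by (rule Bochner_Integration.integral_sum, rule I, intro continuous_intros)
    also have "\<dots> = (\<Sum>i\<in>UNIV. \<Sum>j\<in>UNIV. (\<integral>p. (v $ i * w $ j) * (fst p $ i * fst p $ j) \<partial>M))"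
      by (intro sum.cong refl, rule Bochner_Integration.integral_sum, rule I, intro continuous_intros)
    finally show ?thesis unfolding eq by simp
  qed
  also have "\<dots> = (\<Sum>i\<in>UNIV. v $ i * w $ i / real CARD('n))"
    unfolding E by (simp add: if_distrib sum.delta cong: if_cong)
  also have "\<dots> = (v \<bullet> w) / real CARD('n)"
    unfolding inner_vec_def by (simp add: sum_divide_distrib)
  finally show ?thesis .
qed



lemma young_abs:
  fixes c G r :: real
  assumes "\<bar>c\<bar> \<le> G" "r > 0"
  shows "\<bar>c\<bar> \<le> (if G = 0 then 0 else r / (2*G)) * c^2 + G / (2*r)"
proof (cases "G = 0")
  case True thus ?thesis using assms by simp
next
  case False
  hence G: "G > 0" using assms by linarith
  have "0 \<le> (r * \<bar>c\<bar> - G)^2" by simp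
  hence "2 * r * G * \<bar>c\<bar> \<le> r^2 * c^2 + G^2" by (simp add: power2_eq_square algebra_simps)
  hence "\<bar>c\<bar> \<le> (r^2 * c^2 + G^2) / (2*r*G)" using G assms(2) by (simp add: field_simps)
  also have "\<dots> = r / (2*G) * c^2 + G / (2*r)" using G assms(2) by (simp add: field_simps power2_eq_square)
  finally show ?thesis using False by simp
qed

lemma beta_sq:
  fixes X nr :: real
  assumes "X \<ge> 0" "nr > 0"
  shows "(if X = 0 then 0 else sqrt nr / (2*X)) * X^2 / nr = X / (2 * sqrt nr)"
proof (cases "X = 0")
  case False
  have s: "sqrt nr * sqrt nr = nr" using assms by simp
  have "sqrt nr > 0" using assms by simp
  thus ?thesis using False assms s by (simp add: field_simps power2_eq_square)
qed simp

lemma arith_core: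
  fixes A a nr L \<delta> c d b G W Ff Fy V0 V1 :: real
  assumes L: "L > 0" and A: "A > 0" and a: "a > 0" and nr: "nr \<ge> 1" and aA: "nr^2 * a^2 \<le> A"
    and d: "\<bar>d\<bar> \<le> \<delta>" and cG: "\<bar>c\<bar> \<le> G" and bW: "\<bar>b\<bar> \<le> W"
    and V: "V1 = V0 + a * nr * (c + d) * b + a^2 * nr^2 / (2*L) * (c + d)^2"
    and F: "Ff \<le> Fy + (- (nr * a^2 / (A * L)) * nr * (c + d)) * c + L/2 * (- (nr * a^2 / (A * L)) * nr * (c + d))^2"
  shows "A * Ff + V1 \<le> A * Fy + V0 + (a * nr) * (c * b)
      + A / L * \<delta>^2 + A / L * \<delta> * ((if G = 0 then 0 else sqrt nr / (2*G)) * c^2 + G / (2 * sqrt nr))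
      + a * nr * \<delta> * ((if W = 0 then 0 else sqrt nr / (2*W)) * b^2 + W / (2 * sqrt nr))"
proof -
  define q where "q = nr^2 * a^2"
  have q0: "0 \<le> q" unfolding q_def by simp
  have AF: "A * Ff \<le> A * Fy - q / L * (c + d) * c + q^2 / (2 * A * L) * (c + d)^2"
  proof -
    have "A * Ff \<le> A * (Fy + (- (nr * a^2 / (A * L)) * nr * (c + d)) * c + L/2 * (- (nr * a^2 / (A * L)) * nr * (c + d))^2)"
      using F A by simp
    also have "\<dots> = A * Fy - q / L * (c + d) * c + q^2 / (2 * A * L) * (c + d)^2"
      unfolding q_def using A L by (simp add: field_simps power2_eq_square)
    finally show ?thesis .
  qed
  have qq: "q^2 / (2 * A * L) * (c + d)^2 \<le> q / (2*L) * (c + d)^2"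
  proof -
    have "q^2 / (2*A*L) = q / (2*L) * (q / A)" using A L by (simp add: field_simps power2_eq_square)
    moreover have "q / A \<le> 1" using aA A unfolding q_def by simp
    moreover have "0 \<le> q / (2*L)" using q0 L by simp
    ultimately have "q^2 / (2*A*L) \<le> q / (2*L)"
      using mult_left_mono[of "q/A" 1 "q/(2*L)"] by simp
    from mult_right_mono[OF this, of "(c+d)^2"] show ?thesis by simp
  qed
  have V': "V1 = V0 + a * nr * (c * b) + a * nr * d * b + q / (2*L) * (c + d)^2"
    using V unfolding q_def by (simp add: algebra_simps)
  have sum1: "A * Ff + V1 \<le> A * Fy + V0 + a * nr * (c * b) + a * nr * d * b + q / L * (c * d + d^2)"
  proof -
    have "- (q / L * (c + d) * c) + q / (2*L) * (c + d)^2 + q / (2*L) * (c + d)^2 = q / L * (c * d + d^2)"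
      using L by (simp add: field_simps power2_eq_square)
    thus ?thesis using AF qq V' by linarith
  qed
  have \<delta>0: "\<delta> \<ge> 0" using d by linarith
  have sn: "sqrt nr > 0" using nr by simp
  have t1: "c * d + d^2 \<le> \<delta> * \<bar>c\<bar> + \<delta>^2"
  proof -
    have "c * d \<le> \<bar>c\<bar> * \<bar>d\<bar>" by (metis abs_ge_self abs_mult)
    also have "\<dots> \<le> \<bar>c\<bar> * \<delta>" using d by (intro mult_left_mono) auto
    finally have "c * d \<le> \<bar>c\<bar> * \<delta>" .
    moreover have "d^2 \<le> \<delta>^2" using power_mono[OF d abs_ge_zero, of 2] by simp
    ultimately show ?thesis by (simp add: mult.commute)
  qed
  have t2: "q / L * (c * d + d^2) \<le> A / L * (\<delta> * \<bar>c\<bar> + \<delta>^2)"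
  proof -
    have "q / L * (c * d + d^2) \<le> q / L * (\<delta> * \<bar>c\<bar> + \<delta>^2)"
      using t1 q0 L by (intro mult_left_mono) auto
    also have "\<dots> \<le> A / L * (\<delta> * \<bar>c\<bar> + \<delta>^2)"
      using aA L \<delta>0 unfolding q_def by (intro mult_right_mono divide_right_mono) auto
    finally show ?thesis .
  qed
  have t3: "a * nr * d * b \<le> a * nr * \<delta> * \<bar>b\<bar>"
  proof -
    have "d * b \<le> \<bar>d\<bar> * \<bar>b\<bar>" by (metis abs_ge_self abs_mult)
    also have "\<dots> \<le> \<delta> * \<bar>b\<bar>" using d by (intro mult_right_mono) auto
    finally have "d * b \<le> \<delta> * \<bar>b\<bar>" .
    thus ?thesis using a nr by (simp add: mult.assoc mult_left_mono)
  qed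
  have yc: "\<bar>c\<bar> \<le> (if G = 0 then 0 else sqrt nr / (2*G)) * c^2 + G / (2 * sqrt nr)"
    by (rule young_abs[OF cG sn])
  have yb: "\<bar>b\<bar> \<le> (if W = 0 then 0 else sqrt nr / (2*W)) * b^2 + W / (2 * sqrt nr)"
    by (rule young_abs[OF bW sn])
  have t4: "A / L * (\<delta> * \<bar>c\<bar> + \<delta>^2) \<le> A / L * \<delta>^2 + A / L * \<delta> * ((if G = 0 then 0 else sqrt nr / (2*G)) * c^2 + G / (2 * sqrt nr))"
  proof -
    have "A / L * \<delta> * \<bar>c\<bar> \<le> A / L * \<delta> * ((if G = 0 then 0 else sqrt nr / (2*G)) * c^2 + G / (2 * sqrt nr))"
      using yc A L \<delta>0 by (intro mult_left_mono) auto
    moreover have "A / L * (\<delta> * \<bar>c\<bar> + \<delta>^2) = A / L * \<delta> * \<bar>c\<bar> + A / L * \<delta>^2"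
      by (simp add: distrib_left)
    ultimately show ?thesis by linarith
  qed
  have t5: "a * nr * \<delta> * \<bar>b\<bar> \<le> a * nr * \<delta> * ((if W = 0 then 0 else sqrt nr / (2*W)) * b^2 + W / (2 * sqrt nr))"
    using yb a nr \<delta>0 by (intro mult_left_mono) auto
  show ?thesis using sum1 t2 t3 t4 t5 by linarith
qed


theorem corollary3:
  fixes f :: "real^'n \<Rightarrow> real" and df :: "real^'n \<Rightarrow> real^'n"
    and L \<delta> :: real and x0 u :: "real^'n"
    and es :: "nat \<Rightarrow> real^'n" and ds :: "nat \<Rightarrow> real"
    and M :: "((real^'n) \<times> real) measure" and k :: nat
  assumes convex: "convex_on UNIV f"
    and grad: "\<And>x. (f has_derivative (\<lambda>h. df x \<bullet> h)) (at x)"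
    and lip: "\<And>x y. norm (df x - df y) \<le> L * norm (x - y)"
    and Lpos: "L > 0"
    and past_e: "\<And>j. j \<in> {1..k} \<Longrightarrow> norm (es j) = 1"
    and past_d: "\<And>j. j \<in> {1..k} \<Longrightarrow> \<bar>ds j\<bar> \<le> \<delta>"
    and prob: "prob_space M"
    and sets_M: "sets M = sets borel"
    and sphere: "AE p in M. norm (fst p) = 1"
    and dbound: "AE p in M. \<bar>snd p\<bar> \<le> \<delta>"
    and orth: "\<And>i j. i \<noteq> j \<Longrightarrow> (\<integral>p. fst p $ i * fst p $ j \<partial>M) = 0"
    and var: "\<And>i. (\<integral>p. (fst p $ i)^2 \<partial>M) = 1 / real CARD('n)"
  shows
    "let n = CARD('n); xk = fst (traj L df x0 es ds k); uk = snd (traj L df x0 es ds k);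
         y = ynext L df k xk uk
     in alpha n (Suc k) * (df y \<bullet> (uk - u))
        \<le> Aseq n (Suc k) * (f y - (\<integral>p. f (xnext L df k xk uk (fst p) (snd p)) \<partial>M))
          + Vdiv L u uk - (\<integral>p. Vdiv L u (unext L df k xk uk (fst p) (snd p)) \<partial>M)
          + Aseq n (Suc k) / L * \<delta>^2
          + Aseq n (Suc k) * \<delta> * norm (df y) / (L * sqrt (real n))
          + alpha n (Suc k) * \<delta> * sqrt (real n) / sqrt L * normL L (uk - u)"
proof -
  interpret P: prob_space M by (rule prob)
  define N where "N = CARD('n)"
  define nr where "nr = real N"
  define xk where "xk = fst (traj L df x0 es ds k)"
  define uk where "uk = snd (traj L df x0 es ds k)"
  define y where "y = ynext L df k xk uk"
  define g where "g = df y"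
  define a where "a = alpha N (Suc k)"
  define A where "A = Aseq N (Suc k)"
  define w where "w = u - uk"
  define G where "G = norm g"
  define W where "W = norm w"
  define sn where "sn = sqrt nr"
  define T where "T p = tgrad df y (fst p) (snd p)" for p :: "(real^'n) \<times> real"
  define bG where "bG = (if G = 0 then 0 else sqrt nr / (2*G))"
  define bW where "bW = (if W = 0 then 0 else sqrt nr / (2*W))"
  define Ef where "Ef = (\<integral>p. f (xnext L df k xk uk (fst p) (snd p)) \<partial>M)"
  define EV where "EV = (\<integral>p. Vdiv L u (unext L df k xk uk (fst p) (snd p)) \<partial>M)"
  have nr1: "nr \<ge> 1" unfolding nr_def N_def by (simp add: Suc_le_eq)
  have a_eq: "a = (real k + 2*nr)/(2*nr^2)" unfolding a_def alpha_def nr_def by simp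
  have a0: "a > 0" unfolding a_eq using nr1 by simp
  have Acl: "4*nr^2*A = 4*nr^2 - 4*nr + real (Suc k) * (real (Suc k) - 1) + 4*nr*real (Suc k)"
    unfolding A_def nr_def using Aseq_closed[of N "Suc k"] nr1 unfolding nr_def by simp
  have Acl2: "4*nr^2*A = (real k + 2*nr)^2 + real k" using Acl by (simp add: power2_eq_square algebra_simps)
  have aq: "4*nr^2*(nr^2 * a^2) = (real k + 2*nr)^2" unfolding a_eq using nr1 by (simp add: field_simps power2_eq_square)
  have "4*nr^2*(nr^2 * a^2) \<le> 4*nr^2*A" using Acl2 aq by simp
  hence aA: "nr^2 * a^2 \<le> A" by (rule mult_left_le_imp_le) (use nr1 in simp)
  have A0: "A > 0" using aA a0 nr1
    by (smt (verit) mult_pos_pos zero_less_power)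
  have Tp: "T p = (nr * (g \<bullet> fst p + snd p)) *\<^sub>R fst p" for p
    unfolding T_def tgrad_def g_def nr_def N_def by simp
  have U: "unext L df k xk uk (fst p) (snd p) = uk - (a/L) *\<^sub>R T p" for p
    using unext_eq[OF Lpos, of df k xk uk "fst p" "snd p"] unfolding T_def y_def a_def N_def by simp
  have X: "xnext L df k xk uk (fst p) (snd p) = y + (- (nr*a^2/(A*L))) *\<^sub>R T p" for p
    unfolding xnext_def U y_def[symmetric] using A0 Lpos
    by (simp add: a_def[symmetric] A_def[symmetric] nr_def[symmetric] N_def[symmetric] power2_eq_square)
  have contf: "continuous_on UNIV f"
    using grad by (intro continuous_at_imp_continuous_on) (blast intro: has_derivative_continuous)
  note I = integrable_cont[OF prob sets_M sphere dbound]
  have intF: "integrable M (\<lambda>p. f (xnext L df k xk uk (fst p) (snd p)))"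
    unfolding X Tp
    by (rule I, rule continuous_on_compose2[OF contf _ subset_UNIV], intro continuous_intros)
  have intV: "integrable M (\<lambda>p. Vdiv L u (unext L df k xk uk (fst p) (snd p)))"
    unfolding U Tp Vdiv_eq[OF less_imp_le[OF Lpos]]
    by (rule I, intro continuous_intros)
  define h where "h p = A * f y + Vdiv L u uk + (a * nr) * ((g \<bullet> fst p) * (w \<bullet> fst p))
      + A / L * \<delta>^2 + A / L * \<delta> * (bG * (g \<bullet> fst p)^2 + G / (2 * sqrt nr))
      + a * nr * \<delta> * (bW * (w \<bullet> fst p)^2 + W / (2 * sqrt nr))" for p :: "(real^'n) \<times> real"
  have inth: "integrable M h" unfolding h_def by (rule I, intro continuous_intros)
  have ae: "AE p in M. A * f (xnext L df k xk uk (fst p) (snd p)) + Vdiv L u (unext L df k xk uk (fst p) (snd p)) \<le> h p"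
    using sphere dbound
  proof eventually_elim
    case (elim p)
    define e where "e = fst p"
    define d where "d = snd p"
    define c where "c = g \<bullet> e"
    define b where "b = w \<bullet> e"
    have ne: "norm e = 1" using elim unfolding e_def by simp
    have dd: "\<bar>d\<bar> \<le> \<delta>" using elim unfolding d_def by simp
    have Tp': "T p = (nr * (c + d)) *\<^sub>R e" unfolding Tp c_def d_def e_def ..
    have cG: "\<bar>c\<bar> \<le> G" unfolding c_def G_def using Cauchy_Schwarz_ineq2[of g e] ne by simp
    have bW': "\<bar>b\<bar> \<le> W" unfolding b_def W_def using Cauchy_Schwarz_ineq2[of w e] ne by simp
    have nT: "(norm (T p))^2 = (nr * (c + d))^2" unfolding Tp' using ne by (simp add: power_mult_distrib)
    have Tw: "T p \<bullet> w = nr * (c + d) * b" unfolding Tp' b_def by (simp add: inner_commute)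
    have V: "Vdiv L u (unext L df k xk uk (fst p) (snd p)) = Vdiv L u uk + a * nr * (c + d) * b + a^2 * nr^2 / (2*L) * (c + d)^2"
    proof -
      have eqw: "u - (uk - (a/L) *\<^sub>R T p) = w - (- (a/L)) *\<^sub>R T p" unfolding w_def by simp
      have "(norm (u - (uk - (a/L) *\<^sub>R T p)))^2 = W^2 - 2 * (- (a/L)) * (T p \<bullet> w) + (- (a/L))^2 * (norm (T p))^2"
        unfolding W_def by (simp only: eqw norm_sq_diff_scale)
      hence Z: "(norm (u - (uk - (a/L) *\<^sub>R T p)))^2 = W^2 + 2 * (a/L) * (nr * (c + d) * b) + (a/L)^2 * (nr * (c + d))^2"
        unfolding nT Tw by simp
      have Z2: "L/2 * (W^2 + 2 * (a/L) * (nr * (c + d) * b) + (a/L)^2 * (nr * (c + d))^2)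
          = L/2 * W^2 + a * nr * (c + d) * b + a^2 * nr^2 / (2*L) * (c + d)^2"
        using Lpos by (simp add: field_simps power2_eq_square)
      have V1e: "Vdiv L u (unext L df k xk uk (fst p) (snd p)) = L/2 * (W^2 + 2 * (a/L) * (nr * (c + d) * b) + (a/L)^2 * (nr * (c + d))^2)"
        by (simp only: U Vdiv_eq[OF less_imp_le[OF Lpos]] Z)
      have V0e: "Vdiv L u uk = L/2 * W^2" unfolding W_def w_def using Lpos by (simp add: Vdiv_eq)
      show ?thesis using V1e V0e Z2 by linarith
    qed
    define s where "s = - (nr * a^2 / (A * L)) * nr * (c + d)"
    have hX: "xnext L df k xk uk (fst p) (snd p) = y + s *\<^sub>R e" unfolding X Tp' s_def by simp
    have F: "f (xnext L df k xk uk (fst p) (snd p)) \<le> f y + s * c + L/2 * s^2"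
    proof -
      have "f (y + s *\<^sub>R e) \<le> f y + df y \<bullet> (s *\<^sub>R e) + L/2 * (norm (s *\<^sub>R e))^2"
        by (rule descent[OF grad lip])
      thus ?thesis unfolding hX c_def g_def using ne by (simp add: power_mult_distrib)
    qed
    have core: "A * f (xnext L df k xk uk (fst p) (snd p)) + Vdiv L u (unext L df k xk uk (fst p) (snd p))
      \<le> A * f y + Vdiv L u uk + (a * nr) * (c * b)
      + A / L * \<delta>^2 + A / L * \<delta> * ((if G = 0 then 0 else sqrt nr / (2*G)) * c^2 + G / (2 * sqrt nr))
      + a * nr * \<delta> * ((if W = 0 then 0 else sqrt nr / (2*W)) * b^2 + W / (2 * sqrt nr))"
      by (rule arith_core[OF Lpos A0 a0 nr1 aA dd cG bW' V F[unfolded s_def]])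
    show ?case using core unfolding h_def bG_def bW_def c_def b_def e_def by simp
  qed
  have mono: "(\<integral>p. A * f (xnext L df k xk uk (fst p) (snd p)) + Vdiv L u (unext L df k xk uk (fst p) (snd p)) \<partial>M) \<le> integral\<^sup>L M h"
    by (rule integral_mono_AE[OF _ inth ae]) (intro Bochner_Integration.integrable_add integrable_mult_right intF intV)
  have lhs: "(\<integral>p. A * f (xnext L df k xk uk (fst p) (snd p)) + Vdiv L u (unext L df k xk uk (fst p) (snd p)) \<partial>M) = A * Ef + EV"
    unfolding Ef_def EV_def
    by (subst Bochner_Integration.integral_add) (auto intro: integrable_mult_right intF intV)
  note Q = quad_exp[OF prob sets_M sphere dbound orth var]
  define K0 where "K0 = A * f y + Vdiv L u uk + A / L * \<delta>^2 + A / L * \<delta> * (G / (2 * sqrt nr)) + a * nr * \<delta> * (W / (2 * sqrt nr))"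
  have hexp: "h = (\<lambda>p. K0 + ((a * nr) * ((g \<bullet> fst p) * (w \<bullet> fst p)) + ((A / L * \<delta> * bG) * ((g \<bullet> fst p) * (g \<bullet> fst p))
      + (a * nr * \<delta> * bW) * ((w \<bullet> fst p) * (w \<bullet> fst p)))))"
    unfolding h_def K0_def by (rule ext) (simp add: power2_eq_square algebra_simps)
  have Eh: "integral\<^sup>L M h = K0 + a * (g \<bullet> w) + A / L * \<delta> * (bG * G^2 / nr) + a * nr * \<delta> * (bW * W^2 / nr)"
  proof -
    have cn: "real CARD('n) = nr" by (simp add: nr_def N_def)
    have i1: "integrable M (\<lambda>p. (v1 \<bullet> fst p) * (v2 \<bullet> fst p))" for v1 v2 :: "real^'n"
      by (rule I, intro continuous_intros)
    have "integral\<^sup>L M h = K0 + ((a * nr) * ((g \<bullet> w) / nr) + ((A / L * \<delta> * bG) * ((g \<bullet> g) / nr)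
      + (a * nr * \<delta> * bW) * ((w \<bullet> w) / nr)))"
      unfolding hexp
      by (simp add: Bochner_Integration.integral_add i1 Q P.prob_space cn)
    thus ?thesis using nr1 unfolding G_def W_def by (simp add: power2_norm_eq_inner field_simps)
  qed
  have G0: "G \<ge> 0" "W \<ge> 0" unfolding G_def W_def by auto
  have bGe: "bG * G^2 / nr = G / (2 * sqrt nr)" unfolding bG_def using beta_sq[OF G0(1)] nr1 by simp
  have bWe: "bW * W^2 / nr = W / (2 * sqrt nr)" unfolding bW_def using beta_sq[OF G0(2)] nr1 by simp
  have e1: "A / L * \<delta> * (G / (2 * sqrt nr)) + A / L * \<delta> * (G / (2 * sqrt nr)) = A * \<delta> * G / (L * sqrt nr)"
    using Lpos nr1 by (simp add: field_simps)
  have e2: "a * nr * \<delta> * (W / (2 * sqrt nr)) + a * nr * \<delta> * (W / (2 * sqrt nr)) = a * \<delta> * sqrt nr / sqrt L * normL L (uk - u)"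
  proof -
    have "normL L (uk - u) = sqrt L * W" unfolding W_def w_def using Lpos by (simp add: normL_eq norm_minus_commute)
    moreover have "sqrt nr * sqrt nr = nr" using nr1 by simp
    ultimately show ?thesis using Lpos nr1 by (simp add: field_simps)
  qed
  have gw: "g \<bullet> w = - (g \<bullet> (uk - u))" unfolding w_def by (simp add: inner_diff_right)
  have main: "a * (g \<bullet> (uk - u)) \<le> A * (f y - Ef) + Vdiv L u uk - EV + A / L * \<delta>^2
     + A * \<delta> * G / (L * sqrt nr) + a * \<delta> * sqrt nr / sqrt L * normL L (uk - u)"
  proof -
    have "A * Ef + EV \<le> K0 + a * (g \<bullet> w) + A / L * \<delta> * (G / (2 * sqrt nr)) + a * nr * \<delta> * (W / (2 * sqrt nr))"
      using mono lhs Eh bGe bWe by simp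
    moreover have "a * (g \<bullet> w) = - (a * (g \<bullet> (uk - u)))" unfolding gw by simp
    moreover have "A * (f y - Ef) = A * f y - A * Ef" by (simp add: right_diff_distrib)
    ultimately show ?thesis using e1 e2 unfolding K0_def by linarith
  qed
  show ?thesis
    unfolding Let_def N_def[symmetric] xk_def[symmetric] uk_def[symmetric] y_def[symmetric]
      g_def[symmetric] a_def[symmetric] A_def[symmetric] nr_def[symmetric] Ef_def[symmetric] EV_def[symmetric]
    using main unfolding G_def by simp
qed

end
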